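(* Let $D$ be a domain in $\mathbb{R}^2$, let $\mu > 0$, and let $u$ be $\mu$-panharmonic in $D$, i.e. a real-valued $C^2(D)$ solution of $\nabla^2 u - \mu^2 u = 0$. If $u \geq 0$ in $D$ and $u$ does not vanish identically in $D$, then $$\frac{1}{2}\,u(x) < \frac{1}{\pi r^2}\int_{B_r(x)} u(y)\,\log\frac{r}{|x-y|}\,\mathrm{d}y$$ for every $x \in D$ and every $r > 0$ with $\overline{B_r(x)} \subset D$.
   Context: $B_r(x) = \{y : |y-x| < r\}$ is the open disc. *)

theory Defs
  imports "HOL-Analysis.Analysis"
begin

text \<open>The plane R^2 is modelled by the type complex. Partial derivative of a
real-valued function along direction v (v = 1 for the x-direction, v = i for y).\<close>

definition has_pderiv :: "complex \<Rightarrow> (complex \<Rightarrow> real) \<Rightarrow> real \<Rightarrow> complex \<Rightarrow> bool" where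
  "has_pderiv v f d x \<longleftrightarrow> ((\<lambda>t::real. f (x + of_real t * v)) has_real_derivative d) (at 0)"

definition pderiv :: "complex \<Rightarrow> (complex \<Rightarrow> real) \<Rightarrow> complex \<Rightarrow> real" where
  "pderiv v f x = (THE d. has_pderiv v f d x)"

definition C2_on :: "complex set \<Rightarrow> (complex \<Rightarrow> real) \<Rightarrow> bool" where
  "C2_on D u \<longleftrightarrow> continuous_on D u \<and>
     (\<forall>v\<in>{1, \<i>}. (\<forall>x\<in>D. \<exists>d. has_pderiv v u d x) \<and> continuous_on D (pderiv v u) \<and>
        (\<forall>w\<in>{1, \<i>}. (\<forall>x\<in>D. \<exists>d. has_pderiv w (pderiv v u) d x) \<and>
                      continuous_on D (pderiv w (pderiv v u))))"

definition laplacian :: "(complex \<Rightarrow> real) \<Rightarrow> complex \<Rightarrow> real" where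
  "laplacian u x = pderiv 1 (pderiv 1 u) x + pderiv \<i> (pderiv \<i> u) x"

definition panharmonic :: "real \<Rightarrow> complex set \<Rightarrow> (complex \<Rightarrow> real) \<Rightarrow> bool" where
  "panharmonic \<mu> D u \<longleftrightarrow> C2_on D u \<and> (\<forall>x\<in>D. laplacian u x - \<mu>\<^sup>2 * u x = 0)"

end

theory Submission
  imports Defs
begin

lemma has_pderiv_pderiv: "has_pderiv v f d x \<Longrightarrow> pderiv v f x = d"
  unfolding pderiv_def has_pderiv_def by (blast intro: DERIV_unique)

lemma has_pderiv_shift:
  assumes "has_pderiv v f d (p + of_real t * v)"
  shows "((\<lambda>s. f (p + of_real s * v)) has_real_derivative d) (at t)"
proof -
  have "((\<lambda>s. f ((p + of_real t * v) + of_real s * v)) has_real_derivative d) (at 0)"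
    using assms unfolding has_pderiv_def .
  then have "((\<lambda>s. f (p + of_real (s + t) * v)) has_real_derivative d) (at 0)"
    by (simp add: algebra_simps)
  then show ?thesis using DERIV_shift[of "\<lambda>s. f (p + of_real s * v)" d 0 t] by simp
qed

lemma mvt_sym:
  fixes \<phi> \<phi>' :: "real \<Rightarrow> real"
  assumes "\<And>s. \<bar>s\<bar> \<le> \<bar>a\<bar> \<Longrightarrow> (\<phi> has_real_derivative \<phi>' s) (at s)"
  shows "\<exists>s. \<bar>s\<bar> \<le> \<bar>a\<bar> \<and> \<phi> a - \<phi> 0 = a * \<phi>' s"
proof (cases "a > 0")
  case True
  have "\<exists>z>0. z < a \<and> \<phi> a - \<phi> 0 = (a - 0) * \<phi>' z"
    by (rule MVT2[OF True]) (rule assms, simp)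
  then obtain z where "0 < z" "z < a" "\<phi> a - \<phi> 0 = (a - 0) * \<phi>' z" by blast
  then show ?thesis by (intro exI[of _ z]) auto
next
  case False
  show ?thesis
  proof (cases "a = 0")
    case True then show ?thesis by (intro exI[of _ 0]) simp
  next
    case False
    with \<open>\<not> a > 0\<close> have an: "a < 0" by simp
    have "\<exists>z>a. z < 0 \<and> \<phi> 0 - \<phi> a = (0 - a) * \<phi>' z"
      by (rule MVT2[OF an]) (rule assms, simp)
    then obtain z where "a < z" "z < 0" "\<phi> 0 - \<phi> a = (0 - a) * \<phi>' z" by blast
    then show ?thesis by (intro exI[of _ z]) (auto simp: algebra_simps)
  qed
qed

lemma partials_has_derivative:
  fixes f fx fy :: "complex \<Rightarrow> real"
  assumes D: "open D"
    and px: "\<And>p. p \<in> D \<Longrightarrow> has_pderiv 1 f (fx p) p"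
    and py: "\<And>p. p \<in> D \<Longrightarrow> has_pderiv \<i> f (fy p) p"
    and cx: "continuous_on D fx" and cy: "continuous_on D fy" and z: "z \<in> D"
  shows "(f has_derivative (\<lambda>h. Re h * fx z + Im h * fy z)) (at z)"
  unfolding has_derivative_at_alt
proof (intro conjI allI impI)
  show "bounded_linear (\<lambda>h. Re h * fx z + Im h * fy z)"
    by (intro bounded_linear_intros bounded_linear_Re bounded_linear_Im)
  fix e :: real assume e: "e > 0"
  have icx: "isCont fx z" using cx D z continuous_on_eq_continuous_at by blast
  have icy: "isCont fy z" using cy D z continuous_on_eq_continuous_at by blast
  obtain d1 where d1: "d1 > 0" "\<And>y. dist y z < d1 \<Longrightarrow> dist (fx y) (fx z) < e/2"
    using icx[unfolded continuous_at_eps_delta, rule_format, of "e/2"] e by auto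
  obtain d2 where d2: "d2 > 0" "\<And>y. dist y z < d2 \<Longrightarrow> dist (fy y) (fy z) < e/2"
    using icy[unfolded continuous_at_eps_delta, rule_format, of "e/2"] e by auto
  obtain d0 where d0: "d0 > 0" "ball z d0 \<subseteq> D" using D z open_contains_ball by blast
  define d where "d = min d0 (min d1 d2)"
  have dpos: "d > 0" using d0 d1 d2 by (simp add: d_def)
  show "\<exists>d>0. \<forall>y. norm (y - z) < d \<longrightarrow>
          norm (f y - f z - (Re (y - z) * fx z + Im (y - z) * fy z)) \<le> e * norm (y - z)"
  proof (intro exI[of _ d] conjI allI impI dpos)
    fix y assume y: "norm (y - z) < d"
    define h where "h = y - z"
    define a where "a = Re h"
    define b where "b = Im h"
    define q where "q = z + of_real a"
    have aleh: "\<bar>a\<bar> \<le> norm h" unfolding a_def by (rule abs_Re_le_cmod)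
    have bleh: "\<bar>b\<bar> \<le> norm h" unfolding b_def by (rule abs_Im_le_cmod)
    have hd: "norm h < d" using y h_def by simp
        have hor: "\<exists>s. \<bar>s\<bar> \<le> \<bar>a\<bar> \<and> f (z + of_real a * 1) - f (z + of_real 0 * 1) = a * fx (z + of_real s * 1)"
    proof (rule mvt_sym)
      fix s :: real assume s: "\<bar>s\<bar> \<le> \<bar>a\<bar>"
      have "z + of_real s * 1 \<in> ball z d0"
        using s aleh hd by (simp add: dist_norm d_def)
      then have "z + of_real s * 1 \<in> D" using d0 by blast
      then show "((\<lambda>s. f (z + of_real s * 1)) has_real_derivative fx (z + of_real s * 1)) (at s)"
        by (intro has_pderiv_shift px)
    qed
    then obtain s1 where s1: "\<bar>s1\<bar> \<le> \<bar>a\<bar>" "f q - f z = a * fx (z + of_real s1)"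
      by (auto simp: q_def)
    have ver: "\<exists>t. \<bar>t\<bar> \<le> \<bar>b\<bar> \<and> f (q + of_real b * \<i>) - f (q + of_real 0 * \<i>) = b * fy (q + of_real t * \<i>)"
    proof (rule mvt_sym)
      fix t :: real assume t: "\<bar>t\<bar> \<le> \<bar>b\<bar>"
      have "q + of_real t * \<i> - z = Complex a t"
        by (simp add: q_def complex_eq_iff)
      then have "norm (q + of_real t * \<i> - z) = norm (Complex a t)" by simp
      also have "\<dots> \<le> norm (Complex a b)"
        unfolding cmod_def using t by (simp add: abs_le_square_iff)
      also have "\<dots> = norm h" by (simp add: a_def b_def)
      finally have "q + of_real t * \<i> \<in> ball z d0"
        using hd by (simp add: dist_norm norm_minus_commute d_def)
      then have "q + of_real t * \<i> \<in> D" using d0 by blast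
      then show "((\<lambda>t. f (q + of_real t * \<i>)) has_real_derivative fy (q + of_real t * \<i>)) (at t)"
        by (intro has_pderiv_shift py)
    qed
    then obtain t1 where t1: "\<bar>t1\<bar> \<le> \<bar>b\<bar>" "f y - f q = b * fy (q + of_real t1 * \<i>)"
    proof -
      have "q + of_real b * \<i> = y" by (simp add: q_def a_def b_def h_def complex_eq_iff)
      then show ?thesis using ver that by auto
    qed
    have e1: "\<bar>fx (z + of_real s1) - fx z\<bar> \<le> e/2"
    proof -
      have "dist (z + of_real s1) z < d1" using s1(1) aleh hd by (simp add: dist_norm d_def)
      then show ?thesis using d1(2) by (simp add: dist_real_def less_imp_le)
    qed
    have e2: "\<bar>fy (q + of_real t1 * \<i>) - fy z\<bar> \<le> e/2"
    proof -
      have "q + of_real t1 * \<i> - z = Complex a t1"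
        by (simp add: q_def complex_eq_iff)
      then have "norm (q + of_real t1 * \<i> - z) = norm (Complex a t1)" by simp
      also have "\<dots> \<le> norm (Complex a b)"
        unfolding cmod_def using t1 by (simp add: abs_le_square_iff)
      also have "\<dots> = norm h" by (simp add: a_def b_def)
      finally have "dist (q + of_real t1 * \<i>) z < d2" using hd by (simp add: dist_norm d_def)
      then show ?thesis using d2(2) by (simp add: dist_real_def less_imp_le)
    qed
    have "f y - f z - (Re (y - z) * fx z + Im (y - z) * fy z)
        = a * (fx (z + of_real s1) - fx z) + b * (fy (q + of_real t1 * \<i>) - fy z)"
      using s1(2) t1(2) by (simp add: a_def b_def h_def algebra_simps)
    then have "norm (f y - f z - (Re (y - z) * fx z + Im (y - z) * fy z))
        \<le> \<bar>a\<bar> * \<bar>fx (z + of_real s1) - fx z\<bar> + \<bar>b\<bar> * \<bar>fy (q + of_real t1 * \<i>) - fy z\<bar>"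
      by (simp add: abs_mult[symmetric] abs_triangle_ineq)
    also have "\<dots> \<le> norm h * (e/2) + norm h * (e/2)"
      by (intro add_mono mult_mono aleh bleh e1 e2) auto
    also have "\<dots> = e * norm (y - z)" by (simp add: h_def)
    finally show "norm (f y - f z - (Re (y - z) * fx z + Im (y - z) * fy z)) \<le> e * norm (y - z)" .
  qed
qed

lemma chain_path:
  fixes f :: "complex \<Rightarrow> real"
  assumes f: "(f has_derivative (\<lambda>h. Re h * A + Im h * B)) (at (\<gamma> t))"
    and g: "(\<gamma> has_vector_derivative \<gamma>') (at t)"
  shows "((\<lambda>s. f (\<gamma> s)) has_real_derivative (Re \<gamma>' * A + Im \<gamma>' * B)) (at t)"
proof -
  have g': "(\<gamma> has_derivative (\<lambda>s. s *\<^sub>R \<gamma>')) (at t)"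
    using g unfolding has_vector_derivative_def .
  have "(f \<circ> \<gamma> has_derivative (\<lambda>h. Re h * A + Im h * B) \<circ> (\<lambda>s. s *\<^sub>R \<gamma>')) (at t)"
    by (rule diff_chain_at[OF g' f])
  moreover have "(\<lambda>h. Re h * A + Im h * B) \<circ> (\<lambda>s. s *\<^sub>R \<gamma>') = (*) (Re \<gamma>' * A + Im \<gamma>' * B)"
    by (rule ext) (simp add: algebra_simps)
  ultimately show ?thesis unfolding has_field_derivative_def by (simp add: o_def)
qed

definition polP :: "complex \<Rightarrow> real \<Rightarrow> real \<Rightarrow> complex" where
  "polP z \<rho> \<theta> = z + Complex (\<rho> * cos \<theta>) (\<rho> * sin \<theta>)"

lemma polP_rho: "((\<lambda>\<rho>. polP z \<rho> \<theta>) has_vector_derivative Complex (cos \<theta>) (sin \<theta>)) (at \<rho>)"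
  unfolding has_vector_derivative_complex_iff polP_def
  by (auto intro!: derivative_eq_intros)

lemma polP_theta: "((\<lambda>\<theta>. polP z \<rho> \<theta>) has_vector_derivative Complex (- \<rho> * sin \<theta>) (\<rho> * cos \<theta>)) (at \<theta>)"
  unfolding has_vector_derivative_complex_iff polP_def
  by (auto intro!: derivative_eq_intros)

lemma polP_dist: "dist (polP z \<rho> \<theta>) z = \<bar>\<rho>\<bar>"
proof -
  have "polP z \<rho> \<theta> - z = complex_of_real \<rho> * exp (\<i> * complex_of_real \<theta>)"
    by (simp add: polP_def complex_eq_iff cis_conv_exp[symmetric])
  then show ?thesis by (simp add: dist_norm norm_mult)
qed

lemma polP_ball: "\<bar>\<rho>\<bar> < R \<Longrightarrow> polP z \<rho> \<theta> \<in> ball z R"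
  using polP_dist[of z \<rho> \<theta>] by (simp add: dist_commute)

lemma polP_cont: "continuous_on S (\<lambda>p. polP z (fst p) (snd p))"
  unfolding polP_def by (intro continuous_intros)

lemma cont_polP_comp:
  assumes "continuous_on D g" "ball z R \<subseteq> D"
  shows "continuous_on ({-R<..<R} \<times> T) (\<lambda>p. g (polP z (fst p) (snd p)))"
proof (rule continuous_on_compose2[OF assms(1) polP_cont])
  show "(\<lambda>p. polP z (fst p) (snd p)) ` ({- R<..<R} \<times> T) \<subseteq> D"
    using assms(2) polP_ball by fastforce
qed

lemma cont_polP_theta:
  assumes "continuous_on D g" "ball z R \<subseteq> D" "\<bar>x\<bar> < R"
  shows "continuous_on T (\<lambda>\<theta>. g (polP z x \<theta>))"
proof (rule continuous_on_compose2[OF assms(1)])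
  show "continuous_on T (\<lambda>\<theta>. polP z x \<theta>)" unfolding polP_def by (intro continuous_intros)
  show "(\<lambda>\<theta>. polP z x \<theta>) ` T \<subseteq> D" using assms(2,3) polP_ball by blast
qed

lemma C2_extract:
  assumes "C2_on D u"
  shows "continuous_on D u"
    and "\<And>v x. v \<in> {1, \<i>} \<Longrightarrow> x \<in> D \<Longrightarrow> has_pderiv v u (Defs.pderiv v u x) x"
    and "\<And>v. v \<in> {1, \<i>} \<Longrightarrow> continuous_on D (Defs.pderiv v u)"
    and "\<And>v w x. v \<in> {1, \<i>} \<Longrightarrow> w \<in> {1, \<i>} \<Longrightarrow> x \<in> D \<Longrightarrow>
           has_pderiv w (Defs.pderiv v u) (Defs.pderiv w (Defs.pderiv v u) x) x"
    and "\<And>v w. v \<in> {1, \<i>} \<Longrightarrow> w \<in> {1, \<i>} \<Longrightarrow> continuous_on D (Defs.pderiv w (Defs.pderiv v u))"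
proof -
  show "continuous_on D u" using assms unfolding C2_on_def by blast
  show "\<And>v x. v \<in> {1, \<i>} \<Longrightarrow> x \<in> D \<Longrightarrow> has_pderiv v u (Defs.pderiv v u x) x"
  proof -
    fix v x assume "v \<in> {1, \<i>}" "x \<in> D"
    then obtain d where "has_pderiv v u d x" using assms unfolding C2_on_def by blast
    then show "has_pderiv v u (Defs.pderiv v u x) x" using has_pderiv_pderiv by metis
  qed
  show "\<And>v. v \<in> {1, \<i>} \<Longrightarrow> continuous_on D (Defs.pderiv v u)"
    using assms unfolding C2_on_def by blast
  show "\<And>v w x. v \<in> {1, \<i>} \<Longrightarrow> w \<in> {1, \<i>} \<Longrightarrow> x \<in> D \<Longrightarrow>
           has_pderiv w (Defs.pderiv v u) (Defs.pderiv w (Defs.pderiv v u) x) x"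
  proof -
    fix v w x assume "v \<in> {1, \<i>}" "w \<in> {1, \<i>}" "x \<in> D"
    then obtain d where "has_pderiv w (Defs.pderiv v u) d x" using assms unfolding C2_on_def by blast
    then show "has_pderiv w (Defs.pderiv v u) (Defs.pderiv w (Defs.pderiv v u) x) x" using has_pderiv_pderiv by metis
  qed
  show "\<And>v w. v \<in> {1, \<i>} \<Longrightarrow> w \<in> {1, \<i>} \<Longrightarrow> continuous_on D (Defs.pderiv w (Defs.pderiv v u))"
    using assms unfolding C2_on_def by blast
qed

lemma polar_lap_alg:
  fixes cc ss \<rho> A B a b c2 d :: real
  assumes "cc * cc + ss * ss = 1"
  shows "\<rho> * (cc * A + ss * B) + \<rho> * (\<rho> * (cc * (cc * a + ss * b) + ss * (cc * c2 + ss * d)))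
     + (- \<rho> * cc * A - \<rho> * ss * B - \<rho> * ss * (- \<rho> * ss * a + \<rho> * cc * b) + \<rho> * cc * (- \<rho> * ss * c2 + \<rho> * cc * d))
     = \<rho>\<^sup>2 * (a + d)"
proof -
  have "\<rho> * (cc * A + ss * B) + \<rho> * (\<rho> * (cc * (cc * a + ss * b) + ss * (cc * c2 + ss * d)))
     + (- \<rho> * cc * A - \<rho> * ss * B - \<rho> * ss * (- \<rho> * ss * a + \<rho> * cc * b) + \<rho> * cc * (- \<rho> * ss * c2 + \<rho> * cc * d))
     = \<rho>\<^sup>2 * (cc * cc + ss * ss) * (a + d)"
    by (simp add: algebra_simps power2_eq_square)
  then show ?thesis using assms by simp
qed

lemma circle_ode:
  fixes u :: "complex \<Rightarrow> real"
  assumes D: "open D" and C2: "C2_on D u"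
    and lap: "\<And>p. p \<in> D \<Longrightarrow> laplacian u p = \<mu>\<^sup>2 * u p"
    and B: "ball z R \<subseteq> D"
  obtains N N1 where
    "\<And>\<rho>. \<rho> \<in> {-R<..<R} \<Longrightarrow> ((\<lambda>\<rho>. integral {0..2*pi} (\<lambda>\<theta>. u (polP z \<rho> \<theta>))) has_real_derivative N \<rho>) (at \<rho>)"
    "\<And>\<rho>. \<rho> \<in> {-R<..<R} \<Longrightarrow> (N has_real_derivative N1 \<rho>) (at \<rho>)"
    "\<And>\<rho>. \<rho> \<in> {-R<..<R} \<Longrightarrow> \<rho> * (N \<rho> + \<rho> * N1 \<rho>) = \<rho>\<^sup>2 * \<mu>\<^sup>2 * integral {0..2*pi} (\<lambda>\<theta>. u (polP z \<rho> \<theta>))"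
proof -
  define U where "U = {-R<..<R}"
  define ux where "ux = Defs.pderiv 1 u"
  define uy where "uy = Defs.pderiv \<i> u"
  define uxx where "uxx = Defs.pderiv 1 ux"
  define uxy where "uxy = Defs.pderiv \<i> ux"
  define uyx where "uyx = Defs.pderiv 1 uy"
  define uyy where "uyy = Defs.pderiv \<i> uy"
  note E = C2_extract[OF C2]
  have cu: "continuous_on D u" by (rule E(1))
  have cux: "continuous_on D ux" "continuous_on D uy" unfolding ux_def uy_def by (auto intro: E(3))
  have cuxx: "continuous_on D uxx" "continuous_on D uxy" "continuous_on D uyx" "continuous_on D uyy"
    unfolding uxx_def uxy_def uyx_def uyy_def ux_def uy_def by (auto intro: E(5))
  have du: "(u has_derivative (\<lambda>h. Re h * ux p + Im h * uy p)) (at p)" if "p \<in> D" for p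
    by (rule partials_has_derivative[OF D _ _ cux that]) (auto simp: ux_def uy_def intro: E(2))
  have dux: "(ux has_derivative (\<lambda>h. Re h * uxx p + Im h * uxy p)) (at p)" if "p \<in> D" for p
    by (rule partials_has_derivative[OF D _ _ cuxx(1,2) that]) (auto simp: ux_def uxx_def uxy_def intro: E(4))
  have duy: "(uy has_derivative (\<lambda>h. Re h * uyx p + Im h * uyy p)) (at p)" if "p \<in> D" for p
    by (rule partials_has_derivative[OF D _ _ cuxx(3,4) that]) (auto simp: uy_def uyx_def uyy_def intro: E(4))
  have PD: "polP z \<rho> \<theta> \<in> D" if "\<rho> \<in> U" for \<rho> \<theta>
    using B polP_ball that by (auto simp: U_def)
  define Fr where "Fr = (\<lambda>\<rho> \<theta>. cos \<theta> * ux (polP z \<rho> \<theta>) + sin \<theta> * uy (polP z \<rho> \<theta>))"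
  define Frr where "Frr = (\<lambda>\<rho> \<theta>. cos \<theta> * (cos \<theta> * uxx (polP z \<rho> \<theta>) + sin \<theta> * uxy (polP z \<rho> \<theta>))
                               + sin \<theta> * (cos \<theta> * uyx (polP z \<rho> \<theta>) + sin \<theta> * uyy (polP z \<rho> \<theta>)))"
  define Ft where "Ft = (\<lambda>\<rho> \<theta>. - \<rho> * sin \<theta> * ux (polP z \<rho> \<theta>) + \<rho> * cos \<theta> * uy (polP z \<rho> \<theta>))"
  define Ftt where "Ftt = (\<lambda>\<rho> \<theta>. - \<rho> * cos \<theta> * ux (polP z \<rho> \<theta>) - \<rho> * sin \<theta> * uy (polP z \<rho> \<theta>)
        - \<rho> * sin \<theta> * (- \<rho> * sin \<theta> * uxx (polP z \<rho> \<theta>) + \<rho> * cos \<theta> * uxy (polP z \<rho> \<theta>))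
        + \<rho> * cos \<theta> * (- \<rho> * sin \<theta> * uyx (polP z \<rho> \<theta>) + \<rho> * cos \<theta> * uyy (polP z \<rho> \<theta>)))"
  have dF: "((\<lambda>\<rho>. u (polP z \<rho> \<theta>)) has_real_derivative Fr \<rho> \<theta>) (at \<rho>)" if "\<rho> \<in> U" for \<rho> \<theta>
    using chain_path[OF du[OF PD[OF that]] polP_rho] by (simp add: Fr_def)
  have dux_r: "((\<lambda>\<rho>. ux (polP z \<rho> \<theta>)) has_real_derivative cos \<theta> * uxx (polP z \<rho> \<theta>) + sin \<theta> * uxy (polP z \<rho> \<theta>)) (at \<rho>)"
    if "\<rho> \<in> U" for \<rho> \<theta>
    using chain_path[OF dux[OF PD[OF that]] polP_rho] by simp
  have duy_r: "((\<lambda>\<rho>. uy (polP z \<rho> \<theta>)) has_real_derivative cos \<theta> * uyx (polP z \<rho> \<theta>) + sin \<theta> * uyy (polP z \<rho> \<theta>)) (at \<rho>)"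
    if "\<rho> \<in> U" for \<rho> \<theta>
    using chain_path[OF duy[OF PD[OF that]] polP_rho] by simp
  have dFr: "((\<lambda>\<rho>. Fr \<rho> \<theta>) has_real_derivative Frr \<rho> \<theta>) (at \<rho>)" if "\<rho> \<in> U" for \<rho> \<theta>
    unfolding Fr_def Frr_def
    by (rule derivative_eq_intros dux_r[OF that] duy_r[OF that] refl | simp)+
  have dFt: "((\<lambda>\<theta>. u (polP z \<rho> \<theta>)) has_real_derivative Ft \<rho> \<theta>) (at \<theta>)" if "\<rho> \<in> U" for \<rho> \<theta>
    using chain_path[OF du[OF PD[OF that]] polP_theta] by (simp add: Ft_def)
  have dux_t: "((\<lambda>\<theta>. ux (polP z \<rho> \<theta>)) has_real_derivative - \<rho> * sin \<theta> * uxx (polP z \<rho> \<theta>) + \<rho> * cos \<theta> * uxy (polP z \<rho> \<theta>)) (at \<theta>)"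
    if "\<rho> \<in> U" for \<rho> \<theta>
    using chain_path[OF dux[OF PD[OF that]] polP_theta] by simp
  have duy_t: "((\<lambda>\<theta>. uy (polP z \<rho> \<theta>)) has_real_derivative - \<rho> * sin \<theta> * uyx (polP z \<rho> \<theta>) + \<rho> * cos \<theta> * uyy (polP z \<rho> \<theta>)) (at \<theta>)"
    if "\<rho> \<in> U" for \<rho> \<theta>
    using chain_path[OF duy[OF PD[OF that]] polP_theta] by simp
  have dFtt: "((\<lambda>\<theta>. Ft \<rho> \<theta>) has_real_derivative Ftt \<rho> \<theta>) (at \<theta>)" if "\<rho> \<in> U" for \<rho> \<theta>
    unfolding Ft_def Ftt_def
    apply (rule derivative_eq_intros dux_t[OF that] duy_t[OF that] refl)+
    apply (simp add: algebra_simps)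
    done
  have Uo: "open U" and Uc: "convex U" by (simp_all add: U_def)
    have cc: "continuous_on (U \<times> T) (\<lambda>p. g (polP z (fst p) (snd p)))" if "continuous_on D g" for g T
    unfolding U_def by (rule cont_polP_comp[OF that B])
  have ct: "continuous_on T (\<lambda>\<theta>. g (polP z \<rho> \<theta>))" if "continuous_on D g" "\<rho> \<in> U" for g T \<rho>
    using that(2) by (intro cont_polP_theta[OF that(1) B]) (auto simp: U_def)
  have cFr: "continuous_on (U \<times> cbox 0 (2*pi)) (\<lambda>(x, t). Fr x t)"
    unfolding Fr_def case_prod_beta
    by (intro continuous_intros cc cux)
  have cFrr: "continuous_on (U \<times> cbox 0 (2*pi)) (\<lambda>(x, t). Frr x t)"
    unfolding Frr_def case_prod_beta
    by (intro continuous_intros cc cuxx)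
  have cF\<theta>: "continuous_on {0..2*pi} (\<lambda>\<theta>. u (polP z \<rho> \<theta>))" if "\<rho> \<in> U" for \<rho>
    by (rule ct[OF cu that])
  have cFr\<theta>: "continuous_on {0..2*pi} (Fr \<rho>)" if "\<rho> \<in> U" for \<rho>
    unfolding Fr_def by (intro continuous_intros ct[OF _ that] cux)
  have cFrr\<theta>: "continuous_on {0..2*pi} (Frr \<rho>)" if "\<rho> \<in> U" for \<rho>
    unfolding Frr_def by (intro continuous_intros ct[OF _ that] cuxx)
  have cFtt\<theta>: "continuous_on {0..2*pi} (Ftt \<rho>)" if "\<rho> \<in> U" for \<rho>
    unfolding Ftt_def by (intro continuous_intros ct[OF _ that] cux cuxx)
  define M where "M = (\<lambda>\<rho>. integral {0..2*pi} (\<lambda>\<theta>. u (polP z \<rho> \<theta>)))"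
  define N where "N = (\<lambda>\<rho>. integral {0..2*pi} (Fr \<rho>))"
  define N1 where "N1 = (\<lambda>\<rho>. integral {0..2*pi} (Frr \<rho>))"
  have dM: "(M has_real_derivative N \<rho>) (at \<rho>)" if "\<rho> \<in> U" for \<rho>
  proof -
    have "((\<lambda>x. integral (cbox 0 (2*pi)) (\<lambda>\<theta>. u (polP z x \<theta>))) has_field_derivative integral (cbox 0 (2*pi)) (Fr \<rho>)) (at \<rho> within U)"
    proof (rule leibniz_rule_field_derivative[OF _ _ cFr that Uc])
      show "((\<lambda>x. u (polP z x t)) has_field_derivative Fr x t) (at x within U)" if "x \<in> U" for x t
        using dF[OF that] by (rule has_field_derivative_at_within)
      show "(\<lambda>\<theta>. u (polP z x \<theta>)) integrable_on cbox 0 (2 * pi)" if "x \<in> U" for x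
        unfolding cbox_interval by (rule integrable_continuous_real[OF cF\<theta>[OF that]])
    qed
    then show ?thesis unfolding M_def N_def cbox_interval at_within_open[OF that Uo] .
  qed
  have dN: "(N has_real_derivative N1 \<rho>) (at \<rho>)" if "\<rho> \<in> U" for \<rho>
  proof -
    have "((\<lambda>x. integral (cbox 0 (2*pi)) (Fr x)) has_field_derivative integral (cbox 0 (2*pi)) (Frr \<rho>)) (at \<rho> within U)"
    proof (rule leibniz_rule_field_derivative[OF _ _ cFrr that Uc])
      show "((\<lambda>x. Fr x t) has_field_derivative Frr x t) (at x within U)" if "x \<in> U" for x t
        using dFr[OF that] by (rule has_field_derivative_at_within)
      show "Fr x integrable_on cbox 0 (2 * pi)" if "x \<in> U" for x
        unfolding cbox_interval by (rule integrable_continuous_real[OF cFr\<theta>[OF that]])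
    qed
    then show ?thesis unfolding N_def N1_def cbox_interval at_within_open[OF that Uo] .
  qed
  have ident: "\<rho> * (N \<rho> + \<rho> * N1 \<rho>) = \<rho>\<^sup>2 * \<mu>\<^sup>2 * M \<rho>" if "\<rho> \<in> U" for \<rho>
  proof -
    have iFr: "Fr \<rho> integrable_on {0..2*pi}" by (rule integrable_continuous_real[OF cFr\<theta>[OF that]])
    have iFrr: "Frr \<rho> integrable_on {0..2*pi}" by (rule integrable_continuous_real[OF cFrr\<theta>[OF that]])
    have iFtt: "Ftt \<rho> integrable_on {0..2*pi}" by (rule integrable_continuous_real[OF cFtt\<theta>[OF that]])
    have iF: "(\<lambda>\<theta>. u (polP z \<rho> \<theta>)) integrable_on {0..2*pi}" by (rule integrable_continuous_real[OF cF\<theta>[OF that]])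
    have pw: "\<rho> * Fr \<rho> \<theta> + \<rho> * (\<rho> * Frr \<rho> \<theta>) = \<rho>\<^sup>2 * \<mu>\<^sup>2 * u (polP z \<rho> \<theta>) - Ftt \<rho> \<theta>" for \<theta>
    proof -
      have L: "laplacian u (polP z \<rho> \<theta>) = uxx (polP z \<rho> \<theta>) + uyy (polP z \<rho> \<theta>)"
        unfolding laplacian_def uxx_def uyy_def ux_def uy_def ..
      have "\<rho> * Fr \<rho> \<theta> + \<rho> * (\<rho> * Frr \<rho> \<theta>) + Ftt \<rho> \<theta>
          = \<rho>\<^sup>2 * (uxx (polP z \<rho> \<theta>) + uyy (polP z \<rho> \<theta>))"
        unfolding Fr_def Frr_def Ftt_def by (rule polar_lap_alg[OF sin_cos_squared_add3])
      also have "\<dots> = \<rho>\<^sup>2 * \<mu>\<^sup>2 * u (polP z \<rho> \<theta>)"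
        using lap[OF PD[OF that]] L by simp
      finally show ?thesis by simp
    qed
    have ftc: "(Ftt \<rho> has_integral (Ft \<rho> (2*pi) - Ft \<rho> 0)) {0..2*pi}"
    proof (rule fundamental_theorem_of_calculus)
      show "0 \<le> 2*pi" by simp
      show "((\<lambda>\<theta>. Ft \<rho> \<theta>) has_vector_derivative Ftt \<rho> x) (at x within {0..2*pi})" for x
        using dFtt[OF that, of x] unfolding has_real_derivative_iff_has_vector_derivative
        by (rule has_vector_derivative_at_within)
    qed
    have "Ft \<rho> (2*pi) = Ft \<rho> 0" by (simp add: Ft_def polP_def)
    then have iFtt0: "integral {0..2*pi} (Ftt \<rho>) = 0" using ftc by (simp add: integral_unique)
    have "\<rho> * (N \<rho> + \<rho> * N1 \<rho>) = integral {0..2*pi} (\<lambda>\<theta>. \<rho> * Fr \<rho> \<theta> + \<rho> * (\<rho> * Frr \<rho> \<theta>))"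
    proof -
      have i1: "(\<lambda>\<theta>. \<rho> * Fr \<rho> \<theta>) integrable_on {0..2*pi}" using iFr by (rule integrable_on_mult_right)
      have i2: "(\<lambda>\<theta>. \<rho> * (\<rho> * Frr \<rho> \<theta>)) integrable_on {0..2*pi}"
        using iFrr by (intro integrable_on_mult_right)
      have "integral {0..2*pi} (\<lambda>\<theta>. \<rho> * Fr \<rho> \<theta> + \<rho> * (\<rho> * Frr \<rho> \<theta>))
          = integral {0..2*pi} (\<lambda>\<theta>. \<rho> * Fr \<rho> \<theta>) + integral {0..2*pi} (\<lambda>\<theta>. \<rho> * (\<rho> * Frr \<rho> \<theta>))"
        by (rule integral_add[OF i1 i2])
      also have "\<dots> = \<rho> * N \<rho> + \<rho> * (\<rho> * N1 \<rho>)"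
        unfolding N_def N1_def by (simp add: integral_mult_right)
      finally show ?thesis by (simp add: distrib_left)
    qed
    also have "\<dots> = integral {0..2*pi} (\<lambda>\<theta>. \<rho>\<^sup>2 * \<mu>\<^sup>2 * u (polP z \<rho> \<theta>) - Ftt \<rho> \<theta>)"
      by (simp only: pw)
    also have "\<dots> = \<rho>\<^sup>2 * \<mu>\<^sup>2 * M \<rho> - integral {0..2*pi} (Ftt \<rho>)"
      unfolding M_def using iF iFtt
      by (simp add: integral_diff integrable_on_mult_right integral_mult_right)
    finally show ?thesis using iFtt0 by simp
  qed
  show ?thesis
    by (rule that[of N N1]) (use dM dN ident in \<open>auto simp: U_def M_def\<close>)
qed

locale circ_ode =
  fixes M N N1 :: "real \<Rightarrow> real" and R k :: real
  assumes kpos: "k > 0"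
    and dM: "\<And>\<rho>. \<rho> \<in> {-R<..<R} \<Longrightarrow> (M has_real_derivative N \<rho>) (at \<rho>)"
    and dN: "\<And>\<rho>. \<rho> \<in> {-R<..<R} \<Longrightarrow> (N has_real_derivative N1 \<rho>) (at \<rho>)"
    and ident: "\<And>\<rho>. \<rho> \<in> {-R<..<R} \<Longrightarrow> \<rho> * (N \<rho> + \<rho> * N1 \<rho>) = \<rho>\<^sup>2 * k * M \<rho>"
    and Mnn: "\<And>\<rho>. 0 \<le> \<rho> \<Longrightarrow> \<rho> < R \<Longrightarrow> M \<rho> \<ge> 0"
begin

definition P where "P \<rho> = \<rho> * N \<rho>"

lemma dP: "\<rho> \<in> {-R<..<R} \<Longrightarrow> (P has_real_derivative (N \<rho> + \<rho> * N1 \<rho>)) (at \<rho>)"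
  unfolding P_def[abs_def]
  by (rule derivative_eq_intros dN refl | assumption | simp)+

lemma P'_eq: "0 < \<rho> \<Longrightarrow> \<rho> < R \<Longrightarrow> N \<rho> + \<rho> * N1 \<rho> = \<rho> * k * M \<rho>"
proof -
  assume h: "0 < \<rho>" "\<rho> < R"
  then have "\<rho> * (N \<rho> + \<rho> * N1 \<rho>) = \<rho> * (\<rho> * k * M \<rho>)"
    using ident[of \<rho>] by (simp add: power2_eq_square algebra_simps)
  then show ?thesis using h by simp
qed

lemma mvt_on:
  fixes f f' :: "real \<Rightarrow> real"
  assumes "a < b" "-R < a" "b < R" "\<And>x. x \<in> {-R<..<R} \<Longrightarrow> (f has_real_derivative f' x) (at x)"
  shows "\<exists>\<xi>. a < \<xi> \<and> \<xi> < b \<and> f b - f a = (b - a) * f' \<xi>"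
  using MVT2[OF assms(1), of f f'] assms(2-4) by force

lemma P_nonneg: "0 \<le> \<rho> \<Longrightarrow> \<rho> < R \<Longrightarrow> P \<rho> \<ge> 0"
proof (cases "\<rho> = 0")
  case True then show ?thesis by (simp add: P_def)
next
  case False
  assume h: "0 \<le> \<rho>" "\<rho> < R"
  with False have hp: "0 < \<rho>" by simp
  obtain \<xi> where \<xi>: "0 < \<xi>" "\<xi> < \<rho>" "P \<rho> - P 0 = (\<rho> - 0) * (N \<xi> + \<xi> * N1 \<xi>)"
    using mvt_on[OF hp _ h(2), of P "\<lambda>x. N x + x * N1 x"] dP hp h by force
  have "N \<xi> + \<xi> * N1 \<xi> = \<xi> * k * M \<xi>" using P'_eq \<xi> h by simp
  also have "\<dots> \<ge> 0" using \<xi> h kpos Mnn[of \<xi>] by simp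
  finally show ?thesis using \<xi> hp by (simp add: P_def)
qed

lemma N_nonneg: "0 < \<rho> \<Longrightarrow> \<rho> < R \<Longrightarrow> N \<rho> \<ge> 0"
  using P_nonneg[of \<rho>] by (simp add: P_def zero_le_mult_iff)

lemma M_mono: "0 \<le> a \<Longrightarrow> a \<le> b \<Longrightarrow> b < R \<Longrightarrow> M a \<le> M b"
proof (cases "a = b")
  case False
  assume h: "0 \<le> a" "a \<le> b" "b < R"
  with False have ab: "a < b" by simp
  obtain \<xi> where \<xi>: "a < \<xi>" "\<xi> < b" "M b - M a = (b - a) * N \<xi>"
    using mvt_on[OF ab _ h(3), of M N] dM h by force
  have "N \<xi> \<ge> 0" using N_nonneg \<xi> h by simp
  then have "(b - a) * N \<xi> \<ge> 0" using ab by simp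
  then show ?thesis using \<xi> by linarith
qed simp

lemma M_strict: assumes "M 0 > 0" "0 \<le> a" "a < b" "b < R" shows "M a < M b"
proof -
  have Ppos: "P \<rho> > 0" if tt: "0 < \<rho>" "\<rho> < R" for \<rho>
  proof -
    obtain \<xi> where \<xi>: "0 < \<xi>" "\<xi> < \<rho>" "P \<rho> - P 0 = (\<rho> - 0) * (N \<xi> + \<xi> * N1 \<xi>)"
      using mvt_on[OF tt(1) _ tt(2), of P "\<lambda>x. N x + x * N1 x"] dP tt by force
    have "M \<xi> \<ge> M 0" using M_mono[of 0 \<xi>] \<xi> tt by simp
    then have "M \<xi> > 0" using assms(1) by simp
    have "N \<xi> + \<xi> * N1 \<xi> = \<xi> * k * M \<xi>" using P'_eq \<xi> tt by simp
    also have "\<dots> > 0" using \<xi> kpos \<open>M \<xi> > 0\<close> by simp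
    finally show ?thesis using \<xi> tt by (simp add: P_def)
  qed
  obtain \<xi> where \<xi>: "a < \<xi>" "\<xi> < b" "M b - M a = (b - a) * N \<xi>"
    using mvt_on[OF assms(3) _ assms(4), of M N] dM assms by force
  have "P \<xi> > 0" using Ppos \<xi> assms by simp
  then have "N \<xi> > 0" using \<xi> assms by (simp add: P_def zero_less_mult_iff)
  then have "(b - a) * N \<xi> > 0" using assms by simp
  then show ?thesis using \<xi> by linarith
qed

lemma M_zero: assumes "M 0 = 0" "0 \<le> \<rho>" "\<rho> < R" shows "M \<rho> = 0"
proof (cases "\<rho> = 0")
  case True then show ?thesis using assms by simp
next
  case False
  with assms have rp: "0 < \<rho>" by simp
  define K where "K = k * R / 2"
  have Rp: "R > 0" using rp assms by simp
  have Nb: "N s \<le> K * M s" if tt: "0 < s" "s < R" for s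
  proof -
    define Q where "Q = (\<lambda>t. k * M s * t\<^sup>2 / 2 - P t)"
    have dQ: "(Q has_real_derivative (k * M s * t - (N t + t * N1 t))) (at t)" if "t \<in> {-R<..<R}" for t
      unfolding Q_def by (rule derivative_eq_intros dP[OF that] refl | simp)+
    obtain \<xi> where \<xi>: "0 < \<xi>" "\<xi> < s" "Q s - Q 0 = (s - 0) * (k * M s * \<xi> - (N \<xi> + \<xi> * N1 \<xi>))"
      using mvt_on[OF tt(1) _ tt(2), of Q] dQ tt by force
    have "N \<xi> + \<xi> * N1 \<xi> = \<xi> * k * M \<xi>" using P'_eq \<xi> tt by simp
    moreover have "M \<xi> \<le> M s" using M_mono[of \<xi> s] \<xi> tt by simp
    ultimately have "k * M s * \<xi> - (N \<xi> + \<xi> * N1 \<xi>) \<ge> 0"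
      using \<xi> kpos by (simp add: algebra_simps mult_left_mono)
    then have "Q s \<ge> 0" using \<xi> by (simp add: Q_def P_def)
    then have "s * N s \<le> k * M s * s\<^sup>2 / 2" by (simp add: Q_def P_def)
    then have "N s \<le> k * M s * s / 2" using tt by (simp add: power2_eq_square field_simps)
    also have "\<dots> \<le> K * M s"
    proof -
      have "0 \<le> k * M s" using tt kpos Mnn[of s] by simp
      then have "k * M s * s \<le> k * M s * R" using tt by (intro mult_left_mono) auto
      then show ?thesis unfolding K_def by (simp add: field_simps)
    qed
    finally show ?thesis .
  qed
  define E where "E = (\<lambda>t. M t * exp (- K * t))"
  have dE: "(E has_real_derivative ((N t - K * M t) * exp (- K * t))) (at t)" if "t \<in> {-R<..<R}" for t
    unfolding E_def by (rule derivative_eq_intros dM[OF that] refl | simp add: algebra_simps)+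
  obtain \<xi> where \<xi>: "0 < \<xi>" "\<xi> < \<rho>" "E \<rho> - E 0 = (\<rho> - 0) * ((N \<xi> - K * M \<xi>) * exp (- K * \<xi>))"
    using mvt_on[OF rp _ assms(3), of E] dE rp assms by force
  have "(N \<xi> - K * M \<xi>) * exp (- K * \<xi>) \<le> 0"
    using Nb[of \<xi>] \<xi> assms by (simp add: mult_nonpos_nonneg)
  then have "\<rho> * ((N \<xi> - K * M \<xi>) * exp (- K * \<xi>)) \<le> 0" using rp by (simp add: mult_nonneg_nonpos)
  then have "E \<rho> \<le> E 0" using \<xi> by simp
  then have "M \<rho> * exp (- K * \<rho>) \<le> 0" using assms(1) by (simp add: E_def)
  then have "M \<rho> \<le> 0" by (simp add: mult_le_0_iff)
  then show ?thesis using Mnn[of \<rho>] assms by simp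
qed

end

definition polG :: "real^2 \<Rightarrow> real^2" where
  "polG v = vector [v$1 * cos (v$2), v$1 * sin (v$2)]"

definition polG' :: "real^2 \<Rightarrow> real^2 \<Rightarrow> real^2" where
  "polG' v h = vector [h$1 * cos (v$2) - v$1 * sin (v$2) * h$2, h$1 * sin (v$2) + v$1 * cos (v$2) * h$2]"

lemma vec_nth_has_derivative[derivative_intros]: "((\<lambda>x. x $ i) has_derivative (\<lambda>h. h $ i)) F"
  by (rule bounded_linear_imp_has_derivative) (rule bounded_linear_vec_nth)

lemma basis_2_cases: "i \<in> (Basis :: (real^2) set) \<Longrightarrow> i = axis 1 1 \<or> i = axis 2 1"
  unfolding Basis_vec_def Basis_real_def apply clarify
  subgoal for j u using exhaust_2[of j] by auto
  done

lemma polG_deriv: "(polG has_derivative polG' v) (at v within S)"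
proof -
  have c1: "((\<lambda>x::real^2. x$1 * cos (x$2)) has_derivative (\<lambda>h. h$1 * cos(v$2) - v$1 * sin(v$2) * h$2)) (at v within S)"
    apply (rule derivative_eq_intros refl)+
    apply (simp add: algebra_simps)
    done
  have c2: "((\<lambda>x::real^2. x$1 * sin (x$2)) has_derivative (\<lambda>h. h$1 * sin(v$2) + v$1 * cos(v$2) * h$2)) (at v within S)"
    apply (rule derivative_eq_intros refl)+
    apply (simp add: algebra_simps)
    done
  show ?thesis
  proof (rule iffD2[OF has_derivative_componentwise_within], intro ballI)
    fix i :: "real^2" assume "i \<in> Basis"
    then have "i = axis 1 1 \<or> i = axis 2 1" by (rule basis_2_cases)
    then show "((\<lambda>x. polG x \<bullet> i) has_derivative (\<lambda>x. polG' v x \<bullet> i)) (at v within S)"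
    proof (elim disjE)
      assume 1: "i = axis 1 1"
      show ?thesis unfolding 1 polG_def polG'_def inner_axis vector_2 real_inner_1_right by (rule c1)
    next
      assume 2: "i = axis 2 1"
      show ?thesis unfolding 2 polG_def polG'_def inner_axis vector_2 real_inner_1_right by (rule c2)
    qed
  qed
qed

lemma det_polG': "det (matrix (polG' v)) = v$1"
proof -
  have e: "cos (v$2) * cos (v$2) + sin (v$2) * sin (v$2) = 1" by (rule sin_cos_squared_add3)
  show ?thesis
    unfolding det_2 matrix_def polG'_def
    apply (simp add: axis_def algebra_simps)
    by (metis distrib_left mult.right_neutral e)
qed

lemma polar_complex: "complex_of_real \<rho> * exp (\<i> * complex_of_real \<theta>) = Complex (\<rho> * cos \<theta>) (\<rho> * sin \<theta>)"
  by (simp add: complex_eq_iff cis_conv_exp[symmetric])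

lemma polG_inj: "inj_on polG (box (vector [0,0]) (vector [r, 2*pi]))"
proof (rule inj_onI)
  fix v w :: "real^2"
  assume v: "v \<in> box (vector [0,0]) (vector [r, 2*pi])" and w: "w \<in> box (vector [0,0]) (vector [r, 2*pi])"
    and eq: "polG v = polG w"
  have vb: "0 < v$1" "0 < v$2" "v$2 < 2*pi" using v by (auto simp: mem_box_cart forall_2)
  have wb: "0 < w$1" "0 < w$2" "w$2 < 2*pi" using w by (auto simp: mem_box_cart forall_2)
  define z where "z = Complex (v$1 * cos (v$2)) (v$1 * sin (v$2))"
  have zw: "z = Complex (w$1 * cos (w$2)) (w$1 * sin (w$2))"
    using eq unfolding z_def polG_def by (metis vector_2)
  have zv': "complex_of_real (v$1) * exp (\<i> * complex_of_real (v$2)) = z" unfolding z_def polar_complex ..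
  have zw': "complex_of_real (w$1) * exp (\<i> * complex_of_real (w$2)) = z" unfolding zw polar_complex ..
  have "Arg2pi z = v$2" by (rule Arg2pi_unique[OF zv']) (use vb in auto)
  moreover have "Arg2pi z = w$2" by (rule Arg2pi_unique[OF zw']) (use wb in auto)
  moreover have "norm z = v$1" using zv'[symmetric] vb by (simp add: norm_mult)
  moreover have "norm z = w$1" using zw'[symmetric] wb by (simp add: norm_mult)
  ultimately have "v$1 = w$1" "v$2 = w$2" by auto
  then show "v = w" by (simp add: vec_eq_iff forall_2)
qed

lemma polar_cov:
  fixes F :: "real^2 \<Rightarrow> real"
  assumes cont: "continuous_on (cbox (vector[0,0]) (vector[r,2*pi])) (\<lambda>v. v$1 * F (polG v))"
  shows "(F has_integral integral (cbox (vector[0,0]) (vector[r,2*pi])) (\<lambda>v. v$1 * F (polG v)))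
           (polG ` box (vector[0,0]) (vector[r,2*pi]))"
proof -
  define B where "B = (box (vector[0,0]) (vector[r,2*pi]) :: (real^2) set)"
  define C where "C = (cbox (vector[0,0]) (vector[r,2*pi]) :: (real^2) set)"
  define I where "I = integral C (\<lambda>v. v$1 * F (polG v))"
  have BC: "B \<subseteq> C" unfolding B_def C_def by (rule box_subset_cbox)
  have Bleb: "B \<in> sets lebesgue" unfolding B_def by simp
  have aC: "(\<lambda>v. v$1 * F (polG v)) absolutely_integrable_on C"
    unfolding C_def by (rule absolutely_integrable_continuous[OF cont])
  have aB: "(\<lambda>v. v$1 * F (polG v)) absolutely_integrable_on B"
    by (rule set_integrable_subset[OF aC Bleb BC])
  have IB: "integral B (\<lambda>v. v$1 * F (polG v)) = I"
    unfolding I_def B_def C_def by (rule integral_open_interval)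
  have pos: "v \<in> B \<Longrightarrow> 0 < v$1" for v unfolding B_def by (auto simp: mem_box_cart forall_2)
  have eqB: "\<And>v. v \<in> B - {} \<Longrightarrow> \<bar>det (matrix (polG' v))\<bar> *\<^sub>R (vec (F (polG v)) :: real^1) = vec (v$1 * F (polG v))"
  proof -
    fix v assume "v \<in> B - {}"
    then have "0 < v$1" using pos by simp
    then have "\<bar>det (matrix (polG' v))\<bar> = v$1" by (simp add: det_polG')
    then show "\<bar>det (matrix (polG' v))\<bar> *\<^sub>R (vec (F (polG v)) :: real^1) = vec (v$1 * F (polG v))"
      by (simp add: vec_eq_iff)
  qed
  have L1: "(\<lambda>v. \<bar>det (matrix (polG' v))\<bar> *\<^sub>R (vec (F (polG v)) :: real^1)) absolutely_integrable_on B"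
  proof (rule absolutely_integrable_spike[OF _ negligible_empty eqB])
    show "(\<lambda>v. vec (v$1 * F (polG v)) :: real^1) absolutely_integrable_on B"
      using aB by (simp add: absolutely_integrable_on_1_iff)
  qed
  have L2: "integral B (\<lambda>v. \<bar>det (matrix (polG' v))\<bar> *\<^sub>R (vec (F (polG v)) :: real^1)) = vec I"
  proof -
    have "integral B (\<lambda>v. \<bar>det (matrix (polG' v))\<bar> *\<^sub>R (vec (F (polG v)) :: real^1))
        = integral B (\<lambda>v. vec (v$1 * F (polG v)) :: real^1)"
      by (rule integral_cong) (use eqB in auto)
    also have "\<dots> = vec I" using IB by (subst integral_on_1_eq) simp
    finally show ?thesis .
  qed
  have R: "(\<lambda>w. vec (F w) :: real^1) absolutely_integrable_on (polG ` B) \<and> integral (polG ` B) (\<lambda>w. vec (F w) :: real^1) = vec I"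
    by (rule has_absolute_integral_change_of_variables[OF Bleb polG_deriv polG_inj[of r, folded B_def], of "\<lambda>w. vec (F w) :: real^1" "vec I", THEN iffD1])
      (rule conjI[OF L1 L2])
  then have "F absolutely_integrable_on (polG ` B)"
    by (simp add: absolutely_integrable_on_1_iff)
  then have "F integrable_on (polG ` B)" by (rule set_lebesgue_integral_eq_integral(1))
  moreover have "integral (polG ` B) F = I"
    using R by (subst (asm) integral_on_1_eq) (simp add: vec_eq)
  ultimately have "(F has_integral I) (polG ` B)" by (simp add: has_integral_integrable_integral)
  then show ?thesis unfolding B_def I_def C_def .
qed



lemma image_eq_inv_preimage:
  assumes "\<And>x. h (g x) = x" "\<And>y. g (h y) = y"
  shows "g ` A = {y. h y \<in> A}"
  using assms by (auto, metis image_eqI)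

lemma content_cbox_2:
  "Henstock_Kurzweil_Integration.content (cbox (vector[a1,a2]) (vector[b1,b2]) :: (real^2) set)
     = Henstock_Kurzweil_Integration.content {a1..b1} * Henstock_Kurzweil_Integration.content {a2..b2}"
proof (cases "a1 \<le> b1 \<and> a2 \<le> b2")
  case True
  then have ne: "cbox (vector[a1,a2]) (vector[b1,b2]) \<noteq> ({} :: (real^2) set)"
  proof -
    have "vector[a1,a2] \<in> (cbox (vector[a1,a2]) (vector[b1,b2]) :: (real^2) set)"
      using True by (simp add: mem_box_cart forall_2)
    then show ?thesis by blast
  qed
  show ?thesis using True by (simp add: content_cbox_cart[OF ne] UNIV_2)
next
  case False
  then have e: "cbox (vector[a1,a2]) (vector[b1,b2]) = ({} :: (real^2) set)"
    by (auto simp: mem_box_cart forall_2)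
  show ?thesis using False by (auto simp: e content_real_if)
qed

lemma content_cbox_complex:
  "Henstock_Kurzweil_Integration.content (cbox a b :: complex set)
    = Henstock_Kurzweil_Integration.content {Re a..Re b} * Henstock_Kurzweil_Integration.content {Im a..Im b}"
proof (cases "Re a \<le> Re b \<and> Im a \<le> Im b")
  case True
  then have ne: "cbox a b \<noteq> {}" by (auto simp: box_ne_empty Basis_complex_def)
  show ?thesis using True by (simp add: content_cbox_if ne Basis_complex_def)
next
  case False
  then have e: "cbox a b = {}"
    by (auto simp: in_cbox_complex_iff)
  show ?thesis using False by (auto simp: e content_real_if)
qed

lemma twiddle_pair:
  fixes H :: "real^2 \<Rightarrow> real"
  assumes "(H has_integral I) (cbox (vector[a1,a2]) (vector[b1,b2]))"
  shows "((\<lambda>p. H (vector[fst p, snd p])) has_integral I) (cbox (a1,a2) (b1,b2))"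
proof -
  define g :: "real \<times> real \<Rightarrow> real^2" where "g = (\<lambda>p. vector[fst p, snd p])"
  define h :: "real^2 \<Rightarrow> real \<times> real" where "h = (\<lambda>v. (v$1, v$2))"
  have hg: "h (g x) = x" for x by (simp add: g_def h_def)
  have gh: "g (h y) = y" for y by (simp add: g_def h_def vec_eq_iff forall_2)
  have gimg: "g ` cbox (u1,u2) (v1,v2) = cbox (vector[u1,u2]) (vector[v1,v2])" for u1 u2 v1 v2
    unfolding image_eq_inv_preimage[of h g, OF hg gh]
    by (auto simp: h_def mem_box_cart forall_2 cbox_Pair_iff[symmetric] simp del: cbox_Pair_iff)
  have himg: "h ` cbox a b = cbox (a$1,a$2) (b$1,b$2)" for a b :: "real^2"
    unfolding image_eq_inv_preimage[of g h, OF gh hg]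
    by (auto simp: g_def mem_box_cart forall_2 cbox_Pair_eq)
  have lin: "bounded_linear g"
    unfolding g_def by (auto intro!: linearI simp: vec_eq_iff forall_2 linear_conv_bounded_linear[symmetric])
  have "((\<lambda>x. H (g x)) has_integral (1 / 1) *\<^sub>R I) (h ` cbox (vector[a1,a2]) (vector[b1,b2]))"
  proof (rule has_integral_twiddle[where g=g and h=h, OF _ hg gh linear_continuous_at[OF lin] _ _ _ assms])
    show "\<exists>w z. g ` cbox u v = cbox w z" for u v
      using gimg[of "fst u" "snd u" "fst v" "snd v"] by auto
    show "\<exists>w z. h ` cbox u v = cbox w z" for u v
      using himg by blast
    show "Henstock_Kurzweil_Integration.content (g ` cbox u v) = 1 * Henstock_Kurzweil_Integration.content (cbox u v)" for u v
      using gimg[of "fst u" "snd u" "fst v" "snd v"] content_cbox_2 content_Pair[of "fst u" "snd u" "fst v" "snd v"]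
      by (simp add: cbox_interval)
  qed simp
  then show ?thesis by (simp add: himg g_def)
qed

lemma twiddle_complex:
  fixes H :: "real^2 \<Rightarrow> real"
  assumes "(H has_integral I) (cbox (vector[a1,a2]) (vector[b1,b2]))"
  shows "((\<lambda>z. H (vector[Re (z - x), Im (z - x)])) has_integral I) (cbox (x + Complex a1 a2) (x + Complex b1 b2))"
proof -
  define gl :: "complex \<Rightarrow> real^2" where "gl = (\<lambda>z. vector[Re z, Im z])"
  define g :: "complex \<Rightarrow> real^2" where "g = (\<lambda>z. gl z - gl x)"
  define h :: "real^2 \<Rightarrow> complex" where "h = (\<lambda>v. x + Complex (v$1) (v$2))"
  have gE: "g z = vector[Re (z - x), Im (z - x)]" for z
    by (simp add: g_def gl_def vec_eq_iff forall_2)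
  have hg: "h (g z) = z" for z by (simp add: gE h_def complex_eq_iff)
  have gh: "g (h y) = y" for y by (simp add: gE h_def vec_eq_iff forall_2)
  have gimg: "g ` cbox u v = cbox (g u) (g v)" for u v
    unfolding image_eq_inv_preimage[of h g, OF hg gh]
    by (auto simp: h_def gE mem_box_cart forall_2 in_cbox_complex_iff)
  have himg: "h ` cbox a b = cbox (h a) (h b)" for a b
    unfolding image_eq_inv_preimage[of g h, OF gh hg]
    by (auto simp: h_def gE mem_box_cart forall_2 in_cbox_complex_iff)
  have lin: "bounded_linear gl"
    unfolding gl_def by (auto intro!: linearI simp: vec_eq_iff forall_2 linear_conv_bounded_linear[symmetric])
  have cont: "isCont g z" for z
    unfolding g_def by (intro continuous_intros linear_continuous_at[OF lin])
  have "((\<lambda>z. H (g z)) has_integral (1 / 1) *\<^sub>R I) (h ` cbox (vector[a1,a2]) (vector[b1,b2]))"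
  proof (rule has_integral_twiddle[where g=g and h=h, OF _ hg gh cont _ _ _ assms])
    show "\<exists>w z. g ` cbox u v = cbox w z" for u v
      using gimg by blast
    show "\<exists>w z. h ` cbox u v = cbox w z" for u v
      using himg by blast
    show "Henstock_Kurzweil_Integration.content (g ` cbox u v) = 1 * Henstock_Kurzweil_Integration.content (cbox u v)" for u v
    proof -
      have "g u = vector [Re (u - x), Im (u - x)]" "g v = vector [Re (v - x), Im (v - x)]" by (rule gE)+
      then show ?thesis
        unfolding gimg using content_cbox_2 content_cbox_complex
        by (simp add: content_real_if)
    qed
  qed simp
  moreover have "h ` cbox (vector[a1,a2]) (vector[b1,b2]) = cbox (x + Complex a1 a2) (x + Complex b1 b2)"
    unfolding himg by (simp add: h_def)
  ultimately show ?thesis by (simp add: gE)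
qed

lemma polar_integral:
  fixes f :: "complex \<Rightarrow> real"
  assumes r: "r > 0"
    and cont: "continuous_on (cbox (0,0) (r, 2*pi)) (\<lambda>p. fst p * f (x + Complex (fst p * cos (snd p)) (fst p * sin (snd p))))"
  shows "(f has_integral integral (cbox (0,0) (r, 2*pi)) (\<lambda>p. fst p * f (x + Complex (fst p * cos (snd p)) (fst p * sin (snd p))))) (ball x r)"
proof -
  define Hp where "Hp = (\<lambda>p. fst p * f (x + Complex (fst p * cos (snd p)) (fst p * sin (snd p))))"
  define F :: "real^2 \<Rightarrow> real" where "F = (\<lambda>w. f (x + Complex (w$1) (w$2)))"
  define B where "B = (box (vector[0,0]) (vector[r,2*pi]) :: (real^2) set)"
  define C where "C = (cbox (vector[0,0]) (vector[r,2*pi]) :: (real^2) set)"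
  define C2 where "C2 = (cbox (vector[-r,-r]) (vector[r,r]) :: (real^2) set)"
  have eqH: "v$1 * F (polG v) = Hp (v$1, v$2)" for v
    by (simp add: F_def polG_def Hp_def)
  have cont2: "continuous_on C (\<lambda>v. v$1 * F (polG v))"
  proof -
    have "continuous_on C (\<lambda>v. Hp (v$1, v$2))"
    proof (rule continuous_on_compose2[OF cont[folded Hp_def]])
      show "continuous_on C (\<lambda>v::real^2. (v$1, v$2))"
        by (intro continuous_intros)
      show "(\<lambda>v::real^2. (v$1, v$2)) ` C \<subseteq> cbox (0, 0) (r, 2 * pi)"
        by (auto simp: C_def mem_box_cart forall_2)
    qed
    then show ?thesis by (simp add: eqH)
  qed
  define I2 where "I2 = integral C (\<lambda>v. v$1 * F (polG v))"
  have cov: "(F has_integral I2) (polG ` B)"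
    using polar_cov[OF cont2[unfolded C_def]] unfolding I2_def B_def C_def .
  have "((\<lambda>v. v$1 * F (polG v)) has_integral I2) C"
    unfolding I2_def using integrable_continuous[OF cont2[unfolded C_def]] C_def
    by (simp add: integrable_integral)
  then have "((\<lambda>p. (vector[fst p, snd p] :: real^2)$1 * F (polG (vector[fst p, snd p]))) has_integral I2) (cbox (0,0) (r, 2*pi))"
    unfolding C_def by (rule twiddle_pair)
  moreover have "fst p * F (polG (vector[fst p, snd p])) = Hp p" for p
    by (simp add: F_def polG_def Hp_def)
  ultimately have "(Hp has_integral I2) (cbox (0,0) (r, 2*pi))"
    by simp
  then have I2eq: "I2 = integral (cbox (0,0) (r, 2*pi)) Hp"
    by (simp add: integral_unique)
  have sub: "polG ` B \<subseteq> C2"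
  proof
    fix w assume "w \<in> polG ` B"
    then obtain v where v: "v \<in> B" "w = polG v" by blast
    have vb: "0 < v$1" "v$1 < r" using v(1) by (auto simp: B_def mem_box_cart forall_2)
    have "\<bar>v$1 * cos (v$2)\<bar> \<le> v$1" "\<bar>v$1 * sin (v$2)\<bar> \<le> v$1"
      using vb by (auto simp: abs_mult intro!: mult_left_le)
    then have "\<bar>v$1 * cos (v$2)\<bar> \<le> r" "\<bar>v$1 * sin (v$2)\<bar> \<le> r" using vb by linarith+
    then have "-r \<le> v$1 * cos (v$2)" "v$1 * cos (v$2) \<le> r" "-r \<le> v$1 * sin (v$2)" "v$1 * sin (v$2) \<le> r"
      by (simp_all add: abs_le_iff)
    then show "w \<in> C2" using v(2)
      by (simp add: C2_def polG_def mem_box_cart forall_2)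
  qed
  have "((\<lambda>w. if w \<in> polG ` B then F w else 0) has_integral I2) C2"
    using has_integral_restrict[OF sub, of F I2] cov by simp
  then have "((\<lambda>z. (\<lambda>w. if w \<in> polG ` B then F w else 0) (vector[Re (z - x), Im (z - x)])) has_integral I2)
        (cbox (x + Complex (-r) (-r)) (x + Complex r r))"
    unfolding C2_def by (rule twiddle_complex)
  moreover have Fz: "F (vector[Re (z - x), Im (z - x)]) = f z" for z
  proof -
    have "x + Complex (Re (z - x)) (Im (z - x)) = z" by (simp add: complex_eq_iff)
    then show ?thesis by (simp add: F_def)
  qed
  ultimately have *: "((\<lambda>z. if vector[Re (z - x), Im (z - x)] \<in> polG ` B then f z else 0) has_integral I2)
        (cbox (x + Complex (-r) (-r)) (x + Complex r r))"
    by (simp only: Fz)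
  define E where "E = {z. (vector[Re (z - x), Im (z - x)] :: real^2) \<in> polG ` B}"
  have Echar: "z \<in> E \<longleftrightarrow> (\<exists>\<rho> \<theta>. 0 < \<rho> \<and> \<rho> < r \<and> 0 < \<theta> \<and> \<theta> < 2*pi \<and> z - x = Complex (\<rho> * cos \<theta>) (\<rho> * sin \<theta>))" for z
  proof
    assume "z \<in> E"
    then obtain v where v: "v \<in> B" "vector[Re (z - x), Im (z - x)] = polG v" unfolding E_def by blast
    have vb: "0 < v$1" "v$1 < r" "0 < v$2" "v$2 < 2*pi" using v(1) by (auto simp: B_def mem_box_cart forall_2)
    have "Re (z - x) = v$1 * cos (v$2)" "Im (z - x) = v$1 * sin (v$2)"
      using v(2) unfolding polG_def by (metis vector_2)+
    then have "z - x = Complex (v$1 * cos (v$2)) (v$1 * sin (v$2))" by (simp add: complex_eq_iff)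
    then show "\<exists>\<rho> \<theta>. 0 < \<rho> \<and> \<rho> < r \<and> 0 < \<theta> \<and> \<theta> < 2*pi \<and> z - x = Complex (\<rho> * cos \<theta>) (\<rho> * sin \<theta>)"
      using vb by blast
  next
    assume "\<exists>\<rho> \<theta>. 0 < \<rho> \<and> \<rho> < r \<and> 0 < \<theta> \<and> \<theta> < 2*pi \<and> z - x = Complex (\<rho> * cos \<theta>) (\<rho> * sin \<theta>)"
    then obtain \<rho> \<theta> where h: "0 < \<rho>" "\<rho> < r" "0 < \<theta>" "\<theta> < 2*pi" "z - x = Complex (\<rho> * cos \<theta>) (\<rho> * sin \<theta>)" by blast
    have "vector[\<rho>, \<theta>] \<in> B" using h by (simp add: B_def mem_box_cart forall_2)
    moreover have "vector[Re (z - x), Im (z - x)] = polG (vector[\<rho>, \<theta>])"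
      using h(5) by (simp add: polG_def)
    ultimately show "z \<in> E" unfolding E_def by blast
  qed
  have E_ball: "E \<subseteq> ball x r"
  proof
    fix z assume "z \<in> E"
    then obtain \<rho> \<theta> where h: "0 < \<rho>" "\<rho> < r" "z - x = Complex (\<rho> * cos \<theta>) (\<rho> * sin \<theta>)"
      using Echar[of z] by blast
    have "norm (z - x) = \<rho>"
      using h by (simp add: polar_complex[symmetric] norm_mult)
    then have "norm (x - z) = \<rho>" by (simp add: norm_minus_commute)
    then show "z \<in> ball x r" using h by (simp add: dist_norm)
  qed
  have Esub: "E \<subseteq> cbox (x + Complex (-r) (-r)) (x + Complex r r)"
  proof
    fix z assume "z \<in> E"
    then have "norm (z - x) < r" using E_ball by (auto simp: dist_norm norm_minus_commute)
    then have "\<bar>Re (z - x)\<bar> < r" "\<bar>Im (z - x)\<bar> < r"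
      using abs_Re_le_cmod[of "z - x"] abs_Im_le_cmod[of "z - x"] by linarith+
    then show "z \<in> cbox (x + Complex (-r) (-r)) (x + Complex r r)"
      by (auto simp: in_cbox_complex_iff)
  qed
  have fE: "(f has_integral I2) E"
    using * has_integral_restrict[OF Esub, of f I2] unfolding E_def by simp
  have ball_E: "ball x r - E \<subseteq> {z. z \<bullet> \<i> = Im x}"
  proof
    fix z assume z: "z \<in> ball x r - E"
    show "z \<in> {z. z \<bullet> \<i> = Im x}"
    proof (rule ccontr)
      assume "z \<notin> {z. z \<bullet> \<i> = Im x}"
      then have imz: "Im (z - x) \<noteq> 0" by (simp add: inner_complex_def)
      define w where "w = z - x"
      define \<rho> where "\<rho> = norm w"
      define \<theta> where "\<theta> = Arg2pi w"
      have "w \<noteq> 0" using imz w_def by auto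
      then have rho: "0 < \<rho>" by (simp add: \<rho>_def)
      have "\<rho> < r" using z by (simp add: \<rho>_def w_def dist_norm norm_minus_commute)
      have th: "0 \<le> \<theta>" "\<theta> < 2*pi" by (simp_all add: \<theta>_def Arg2pi_ge_0 Arg2pi_lt_2pi)
      have "\<theta> \<noteq> 0" using imz unfolding \<theta>_def w_def Arg2pi_eq_0 complex_is_Real_iff by simp
      with th have th0: "0 < \<theta>" by simp
      have "w = of_real \<rho> * exp (\<i> * of_real \<theta>)"
        unfolding \<rho>_def \<theta>_def by (rule Arg2pi_eq)
      then have "w = Complex (\<rho> * cos \<theta>) (\<rho> * sin \<theta>)"
        by (simp only: polar_complex)
      then have zx: "z - x = Complex (\<rho> * cos \<theta>) (\<rho> * sin \<theta>)" by (simp add: w_def)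
      have "z \<in> E" unfolding Echar[of z]
        by (rule exI[of _ \<rho>], rule exI[of _ \<theta>]) (simp add: rho \<open>\<rho> < r\<close> th th0 zx)
      then show False using z by blast
    qed
  qed
  have neg: "negligible {z :: complex. z \<bullet> \<i> = Im x}"
    by (rule negligible_standard_hyperplane) (simp add: Basis_complex_def)
  have "(f has_integral I2) (ball x r)"
  proof (rule has_integral_spike_set_eq[THEN iffD1, OF _ _ fE])
    have "{z \<in> E - ball x r. f z \<noteq> 0} = {}" using E_ball by blast
    then show "negligible {z \<in> E - ball x r. f z \<noteq> 0}" by (simp only: negligible_empty)
    show "negligible {z \<in> ball x r - E. f z \<noteq> 0}"
      by (rule negligible_subset[OF neg]) (use ball_E in blast)
  qed
  then show ?thesis unfolding I2eq Hp_def .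
qed

lemma xlnx_lim: "((\<lambda>\<rho>::real. \<rho> * ln \<rho>) \<longlongrightarrow> 0) (at_right 0)"
proof (rule tendsto_sandwich[of "\<lambda>\<rho>. - 2 * sqrt \<rho>" _ _ "\<lambda>_. 0"])
  have ev: "eventually (\<lambda>\<rho>::real. 0 < \<rho> \<and> \<rho> < 1) (at_right 0)"
    by (rule eventually_at_rightI[of 0 1]) auto
  show "eventually (\<lambda>\<rho>. - 2 * sqrt \<rho> \<le> \<rho> * ln \<rho>) (at_right 0)"
  proof (rule eventually_mono[OF ev], safe)
    fix \<rho> :: real assume h: "0 < \<rho>" "\<rho> < 1"
    have s: "0 < sqrt \<rho>" using h by simp
    have "ln (1 / sqrt \<rho>) \<le> 1 / sqrt \<rho> - 1" using s by (intro ln_le_minus_one) simp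
    moreover have "ln (1 / sqrt \<rho>) = - ln \<rho> / 2" using h by (simp add: ln_div ln_sqrt)
    ultimately have "- ln \<rho> \<le> 2 / sqrt \<rho>" by simp
    then have "\<rho> * (- ln \<rho>) \<le> \<rho> * (2 / sqrt \<rho>)" using h by (intro mult_left_mono) auto
    also have "\<rho> * (2 / sqrt \<rho>) = 2 * sqrt \<rho>"
    proof -
      have "\<rho> * (2 / sqrt \<rho>) = 2 * (\<rho> / sqrt \<rho>)" by simp
      also have "\<dots> = 2 * sqrt \<rho>" using h by (simp add: real_div_sqrt)
      finally show ?thesis .
    qed
    finally show "- 2 * sqrt \<rho> \<le> \<rho> * ln \<rho>" by simp
  qed
  show "eventually (\<lambda>\<rho>::real. \<rho> * ln \<rho> \<le> 0) (at_right 0)"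
    using ev by (rule eventually_mono) (auto intro: mult_nonneg_nonpos)
  have "((\<lambda>\<rho>. sqrt \<rho>) \<longlongrightarrow> sqrt 0) (at_right (0::real))"
    by (intro tendsto_intros)
  then show "((\<lambda>\<rho>. - 2 * sqrt \<rho>) \<longlongrightarrow> 0) (at_right 0)"
    using tendsto_mult_left[of _ 0 _ "-2"] by (metis mult_zero_right real_sqrt_zero)
qed simp

lemma w_lim: assumes "r > 0" shows "((\<lambda>\<rho>::real. \<rho> * ln (r / \<rho>)) \<longlongrightarrow> 0) (at_right 0)"
proof -
  have "((\<lambda>\<rho>::real. \<rho> * ln r - \<rho> * ln \<rho>) \<longlongrightarrow> 0 * ln r - 0) (at_right 0)"
    by (intro tendsto_intros xlnx_lim)
  moreover have "eventually (\<lambda>\<rho>. \<rho> * ln r - \<rho> * ln \<rho> = \<rho> * ln (r / \<rho>)) (at_right 0)"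
    using eventually_at_right_less[of 0] assms
    by (auto elim!: eventually_mono simp: ln_div algebra_simps)
  ultimately show ?thesis by (simp add: tendsto_cong)
qed

lemma w_cont: assumes "r > 0" shows "continuous_on {0..r} (\<lambda>\<rho>::real. \<rho> * ln (r / \<rho>))"
  unfolding continuous_on_eq_continuous_within
proof
  fix x assume x: "x \<in> {0..r}"
  show "continuous (at x within {0..r}) (\<lambda>\<rho>. \<rho> * ln (r / \<rho>))"
  proof (cases "x = 0")
    case True
    show ?thesis unfolding True continuous_within at_within_Icc_at_right[OF assms]
      using w_lim[OF assms] by simp
  next
    case False
    then have "x > 0" using x by simp
    then have "isCont (\<lambda>\<rho>. \<rho> * ln (r / \<rho>)) x" using assms by (intro continuous_intros) auto
    then show ?thesis by (rule continuous_at_imp_continuous_at_within)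
  qed
qed

lemma w_int: assumes "r > 0"
  shows "((\<lambda>\<rho>::real. \<rho> * ln (r / \<rho>)) has_integral r\<^sup>2 / 4) {0..r}"
proof -
  define w where "w = (\<lambda>\<rho>::real. \<rho> * ln (r / \<rho>))"
  define G where "G = (\<lambda>\<rho>::real. \<rho> / 2 * w \<rho> + \<rho>\<^sup>2 / 4)"
  have cw: "continuous_on {0..r} w" unfolding w_def by (rule w_cont[OF assms])
  have cG: "continuous_on {0..r} G" unfolding G_def
    by (intro continuous_intros cw) auto
  have "((\<lambda>\<rho>::real. \<rho> * ln (r / \<rho>)) has_integral G r - G 0) {0..r}"
  proof (rule fundamental_theorem_of_calculus_interior)
    show "0 \<le> r" using assms by simp
    show "continuous_on {0..r} G" by (rule cG)
    fix x assume x: "x \<in> {0<..<r}"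
    have "(G has_real_derivative x * ln (r / x)) (at x)"
      unfolding G_def w_def using x assms
      by (auto intro!: derivative_eq_intros simp: field_simps power2_eq_square)
    then show "(G has_vector_derivative x * ln (r / x)) (at x)"
      by (simp add: has_real_derivative_iff_has_vector_derivative)
  qed
  moreover have "G r - G 0 = r\<^sup>2 / 4" by (simp add: G_def w_def)
  ultimately show ?thesis by simp
qed

lemma circ_setup:
  fixes u :: "complex \<Rightarrow> real"
  assumes D: "open D" and C2: "C2_on D u"
    and lap: "\<And>p. p \<in> D \<Longrightarrow> laplacian u p = \<mu>\<^sup>2 * u p"
    and B: "ball z R \<subseteq> D" and mu: "\<mu> > 0" and nn: "\<And>y. y \<in> D \<Longrightarrow> u y \<ge> 0"
  obtains N N1 where "circ_ode (\<lambda>\<rho>. integral {0..2*pi} (\<lambda>\<theta>. u (polP z \<rho> \<theta>))) N N1 R (\<mu>\<^sup>2)"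
proof -
  obtain N N1 where h:
    "\<And>\<rho>. \<rho> \<in> {-R<..<R} \<Longrightarrow> ((\<lambda>\<rho>. integral {0..2*pi} (\<lambda>\<theta>. u (polP z \<rho> \<theta>))) has_real_derivative N \<rho>) (at \<rho>)"
    "\<And>\<rho>. \<rho> \<in> {-R<..<R} \<Longrightarrow> (N has_real_derivative N1 \<rho>) (at \<rho>)"
    "\<And>\<rho>. \<rho> \<in> {-R<..<R} \<Longrightarrow> \<rho> * (N \<rho> + \<rho> * N1 \<rho>) = \<rho>\<^sup>2 * \<mu>\<^sup>2 * integral {0..2*pi} (\<lambda>\<theta>. u (polP z \<rho> \<theta>))"
    using circle_ode[OF D C2 lap B] by metis
  have cu: "continuous_on D u" by (rule C2_extract(1)[OF C2])
  show ?thesis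
  proof (rule that[of N N1], unfold_locales)
    show "0 < \<mu>\<^sup>2" using mu by simp
    show "\<And>\<rho>. \<rho> \<in> {-R<..<R} \<Longrightarrow> ((\<lambda>\<rho>. integral {0..2*pi} (\<lambda>\<theta>. u (polP z \<rho> \<theta>))) has_real_derivative N \<rho>) (at \<rho>)"
      by (rule h(1))
    show "\<And>\<rho>. \<rho> \<in> {-R<..<R} \<Longrightarrow> (N has_real_derivative N1 \<rho>) (at \<rho>)" by (rule h(2))
    show "\<And>\<rho>. \<rho> \<in> {-R<..<R} \<Longrightarrow> \<rho> * (N \<rho> + \<rho> * N1 \<rho>) = \<rho>\<^sup>2 * \<mu>\<^sup>2 * integral {0..2*pi} (\<lambda>\<theta>. u (polP z \<rho> \<theta>))"
      by (rule h(3))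
    fix \<rho> :: real assume r: "0 \<le> \<rho>" "\<rho> < R"
    show "0 \<le> integral {0..2*pi} (\<lambda>\<theta>. u (polP z \<rho> \<theta>))"
    proof (rule Henstock_Kurzweil_Integration.integral_nonneg)
      show "(\<lambda>\<theta>. u (polP z \<rho> \<theta>)) integrable_on {0..2*pi}"
        using r by (intro integrable_continuous_real cont_polP_theta[OF cu B]) auto
      show "0 \<le> u (polP z \<rho> \<theta>)" for \<theta>
        using r B polP_ball[of \<rho> R z \<theta>] nn by auto
    qed
  qed
qed

lemma M_at_0: "integral {0..2*pi} (\<lambda>\<theta>. u (polP z 0 \<theta>)) = 2 * pi * u z"
proof -
  have "polP z 0 \<theta> = z" for \<theta> by (simp add: polP_def complex_eq_iff)
  then show ?thesis by simp
qed

lemma polP_surj: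
  assumes "dist z y < R"
  obtains \<rho> \<theta> where "0 \<le> \<rho>" "\<rho> < R" "0 \<le> \<theta>" "\<theta> \<le> 2*pi" "y = polP z \<rho> \<theta>"
proof -
  define w where "w = y - z"
  have "w = of_real (norm w) * exp (\<i> * of_real (Arg2pi w))" by (rule Arg2pi_eq)
  then have "w = Complex (norm w * cos (Arg2pi w)) (norm w * sin (Arg2pi w))"
    by (simp only: polar_complex)
  then have "y = polP z (norm w) (Arg2pi w)" by (simp add: polP_def w_def algebra_simps)
  moreover have "norm w < R" using assms by (simp add: w_def dist_norm norm_minus_commute)
  ultimately show ?thesis
    using that[of "norm w" "Arg2pi w"] Arg2pi_ge_0[of w] Arg2pi_lt_2pi[of w] by simp
qed

lemma ball_extend:
  fixes x :: complex
  assumes D: "open D" and sub: "cball x r \<subseteq> D" and r: "r > 0"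
  obtains R where "R > r" "ball x R \<subseteq> D"
proof -
  obtain e where e: "e > 0" "(\<Union>y\<in>cball x r. ball y e) \<subseteq> D"
    using compact_subset_open_imp_ball_epsilon_subset[of "cball x r" D] compact_cball[of x r] D sub by blast
  have "ball x (r + e) \<subseteq> D"
  proof
    fix y assume y: "y \<in> ball x (r + e)"
    define d where "d = dist x y"
    show "y \<in> D"
    proof (cases "d \<le> r")
      case True
      then have yc: "y \<in> cball x r" by (simp add: d_def)
      have "y \<in> ball y e" using e(1) by simp
      then have "y \<in> (\<Union>y\<in>cball x r. ball y e)" using yc by blast
      then show ?thesis using e(2) by blast
    next
      case False
      then have dpos: "d > 0" "d > r" using r by auto
      define w where "w = x + (r / d) *\<^sub>R (y - x)"
      have nd: "norm (y - x) = d" by (simp add: d_def dist_norm norm_minus_commute)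
      have "dist x w = norm ((r / d) *\<^sub>R (y - x))"
        by (simp add: w_def dist_norm)
      also have "\<dots> = (r / d) * d" using dpos r by (simp only: norm_scaleR nd) simp
      also have "\<dots> = r" using dpos by simp
      finally have "dist x w = r" .
      then have wc: "w \<in> cball x r" by simp
      have "y - w = (1 - r / d) *\<^sub>R (y - x)" by (simp add: w_def algebra_simps)
      then have "dist w y = norm ((1 - r / d) *\<^sub>R (y - x))"
        by (simp add: dist_norm norm_minus_commute[of w y])
      also have "\<dots> = (1 - r / d) * d" using dpos by (simp only: norm_scaleR nd) simp
      also have "\<dots> = d - r" using dpos by (simp add: field_simps)
      also have "\<dots> < e" using y by (simp add: d_def)
      finally have "y \<in> ball w e" by simp
      then show ?thesis using e wc by blast
    qed
  qed
  then show ?thesis using that[of "r + e"] e by simp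
qed

lemma u_pos:
  fixes u :: "complex \<Rightarrow> real"
  assumes D: "open D" and conn: "connected D" and C2: "C2_on D u"
    and lap: "\<And>p. p \<in> D \<Longrightarrow> laplacian u p = \<mu>\<^sup>2 * u p"
    and mu: "\<mu> > 0" and nn: "\<And>y. y \<in> D \<Longrightarrow> u y \<ge> 0" and ex: "\<exists>y\<in>D. u y \<noteq> 0"
    and z: "z \<in> D"
  shows "u z > 0"
proof -
  have cu: "continuous_on D u" by (rule C2_extract(1)[OF C2])
  define Z where "Z = {z \<in> D. u z = 0}"
  have cl: "closedin (top_of_set D) Z" unfolding Z_def by (rule continuous_closedin_preimage_constant[OF cu])
  have op: "open Z"
    unfolding open_contains_ball
  proof (intro ballI)
    fix z assume z: "z \<in> Z"
    then have zD: "z \<in> D" and uz: "u z = 0" by (auto simp: Z_def)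
    obtain R where R: "R > 0" "ball z R \<subseteq> D" using D zD open_contains_ball by blast
    obtain N N1 where co: "circ_ode (\<lambda>\<rho>. integral {0..2*pi} (\<lambda>\<theta>. u (polP z \<rho> \<theta>))) N N1 R (\<mu>\<^sup>2)"
      using circ_setup[OF D C2 lap R(2) mu nn] by blast
    have M0: "(\<lambda>\<rho>. integral {0..2*pi} (\<lambda>\<theta>. u (polP z \<rho> \<theta>))) 0 = 0" using M_at_0[of u z] uz by simp
    have "ball z R \<subseteq> Z"
    proof
      fix y assume y: "y \<in> ball z R"
      obtain \<rho> \<theta> where h: "0 \<le> \<rho>" "\<rho> < R" "0 \<le> \<theta>" "\<theta> \<le> 2*pi" "y = polP z \<rho> \<theta>"
        using polP_surj[of z y R] y by auto
      have i0: "integral {0..2*pi} (\<lambda>\<theta>. u (polP z \<rho> \<theta>)) = 0"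
        using circ_ode.M_zero[OF co M0 h(1) h(2)] by simp
      have ct: "continuous_on {0..2*pi} (\<lambda>\<theta>. u (polP z \<rho> \<theta>))"
        using h by (intro cont_polP_theta[OF cu R(2)]) auto
      have nn': "0 \<le> u (polP z \<rho> t)" for t
        using h R(2) polP_ball[of \<rho> R z t] nn by auto
      have "\<forall>t\<in>{0..2*pi}. u (polP z \<rho> t) = 0"
        using integral_eq_0_iff[of 0 "2*pi" "\<lambda>\<theta>. u (polP z \<rho> \<theta>)"] ct nn' i0 by simp
      then have "u y = 0" using h by auto
      moreover have "y \<in> D" using R y by blast
      ultimately show "y \<in> Z" by (simp add: Z_def)
    qed
    then show "\<exists>e>0. ball z e \<subseteq> Z" using R by blast
  qed
  have "openin (top_of_set D) Z" using op openin_open_eq[OF D] by (auto simp: Z_def)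
  then have "Z = {} \<or> Z = D" using conn cl connected_clopen by blast
  moreover have "Z \<noteq> D" using ex by (auto simp: Z_def)
  ultimately have "Z = {}" by simp
  then have "u z \<noteq> 0" using z by (auto simp: Z_def)
  then show ?thesis using nn[OF z] by simp
qed

theorem corollary5p1:
  fixes D :: "complex set" and \<mu> :: real and u :: "complex \<Rightarrow> real"
  assumes "open D" and "connected D" and "D \<noteq> {}"
    and "\<mu> > 0"
    and "panharmonic \<mu> D u"
    and "\<forall>y\<in>D. u y \<ge> 0"
    and "\<exists>y\<in>D. u y \<noteq> 0"
  shows "\<forall>x\<in>D. \<forall>r>0. cball x r \<subseteq> D \<longrightarrow>
           u x / 2 < (1 / (pi * r\<^sup>2)) * integral (ball x r) (\<lambda>y. u y * ln (r / dist x y))"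
proof (intro ballI allI impI)
  fix x r assume xD: "x \<in> D" and r: "r > 0" and sub: "cball x r \<subseteq> D"
  have D: "open D" by (rule assms(1))
  have C2: "C2_on D u" using assms(5) by (simp add: panharmonic_def)
  have lap: "\<And>p. p \<in> D \<Longrightarrow> laplacian u p = \<mu>\<^sup>2 * u p" using assms(5) by (simp add: panharmonic_def)
  have nn: "\<And>y. y \<in> D \<Longrightarrow> u y \<ge> 0" using assms(6) by blast
  have cu: "continuous_on D u" by (rule C2_extract(1)[OF C2])
  have ux: "u x > 0" by (rule u_pos[OF D assms(2) C2 lap assms(4) nn assms(7) xD])
  obtain R where R: "R > r" "ball x R \<subseteq> D" using ball_extend[OF D sub r] by blast
  define M where "M = (\<lambda>\<rho>. integral {0..2*pi} (\<lambda>\<theta>. u (polP x \<rho> \<theta>)))"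
  obtain N N1 where co: "circ_ode M N N1 R (\<mu>\<^sup>2)"
    using circ_setup[OF D C2 lap R(2) assms(4) nn] unfolding M_def by blast
  have M0: "M 0 = 2 * pi * u x" unfolding M_def by (rule M_at_0)
  have M0pos: "M 0 > 0" using M0 ux by simp
  define w where "w = (\<lambda>\<rho>::real. \<rho> * ln (r / \<rho>))"
  define f where "f = (\<lambda>y. u y * ln (r / dist x y))"
  define Hp where "Hp = (\<lambda>p. fst p * f (x + Complex (fst p * cos (snd p)) (fst p * sin (snd p))))"
  have Hp_eq: "Hp p = w (fst p) * u (polP x (fst p) (snd p))" if "p \<in> cbox (0,0) (r, 2*pi)" for p
  proof -
    have p0: "fst p \<ge> 0" using that by (cases p) (simp add: cbox_Pair_iff)
    have "dist x (polP x (fst p) (snd p)) = fst p"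
      using polP_dist[of x "fst p" "snd p"] p0 by (simp add: dist_commute)
    then show ?thesis unfolding Hp_def f_def w_def polP_def[symmetric] by simp
  qed
  have cw: "continuous_on {0..r} w" unfolding w_def by (rule w_cont[OF r])
  have cHp: "continuous_on (cbox (0,0) (r, 2*pi)) Hp"
  proof -
    have "continuous_on (cbox (0,0) (r, 2*pi)) (\<lambda>p. w (fst p) * u (polP x (fst p) (snd p)))"
    proof (rule continuous_on_mult)
      show "continuous_on (cbox (0,0) (r, 2*pi)) (\<lambda>p. w (fst p))"
      proof (rule continuous_on_compose2[OF cw])
        show "continuous_on (cbox (0,0) (r, 2*pi)) (fst :: real \<times> real \<Rightarrow> real)" by (intro continuous_intros)
        show "fst ` cbox (0,0) (r, 2*pi) \<subseteq> {0..r}" by (auto simp: cbox_Pair_eq)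
      qed
      show "continuous_on (cbox (0,0) (r, 2*pi)) (\<lambda>p. u (polP x (fst p) (snd p)))"
      proof (rule continuous_on_subset[OF cont_polP_comp[OF cu R(2)]])
        show "cbox (0,0) (r, 2*pi) \<subseteq> {-R<..<R} \<times> (UNIV :: real set)"
          using R(1) r by (auto simp: cbox_Pair_eq)
      qed
    qed
    then show ?thesis by (rule continuous_on_cong[THEN iffD1, OF refl, rotated]) (simp add: Hp_eq)
  qed
  have pol: "(f has_integral integral (cbox (0,0) (r, 2*pi)) Hp) (ball x r)"
    using polar_integral[OF r cHp[unfolded Hp_def]] unfolding Hp_def .
  have fub: "integral (cbox (0,0) (r, 2*pi)) Hp = integral (cbox 0 r) (\<lambda>\<rho>. integral (cbox 0 (2*pi)) (\<lambda>\<theta>. Hp (\<rho>, \<theta>)))"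
    by (rule integral_prod_continuous[OF cHp])
  have inner: "integral (cbox 0 (2*pi)) (\<lambda>\<theta>. Hp (\<rho>, \<theta>)) = w \<rho> * M \<rho>" if "\<rho> \<in> cbox 0 r" for \<rho>
  proof -
    have "integral (cbox 0 (2*pi)) (\<lambda>\<theta>. Hp (\<rho>, \<theta>)) = integral {0..2*pi} (\<lambda>\<theta>. w \<rho> * u (polP x \<rho> \<theta>))"
      unfolding cbox_interval
      by (rule integral_cong) (use that in \<open>auto simp: Hp_eq cbox_Pair_iff\<close>)
    also have "\<dots> = w \<rho> * M \<rho>" by (simp add: M_def)
    finally show ?thesis .
  qed
  define \<Phi> where "\<Phi> = integral (ball x r) f"
  have Phi: "\<Phi> = integral {0..r} (\<lambda>\<rho>. w \<rho> * M \<rho>)"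
  proof -
    have "\<Phi> = integral (cbox 0 r) (\<lambda>\<rho>. integral (cbox 0 (2*pi)) (\<lambda>\<theta>. Hp (\<rho>, \<theta>)))"
      unfolding \<Phi>_def using pol fub by (simp add: integral_unique)
    also have "\<dots> = integral (cbox 0 r) (\<lambda>\<rho>. w \<rho> * M \<rho>)"
      by (rule integral_cong) (rule inner)
    finally show ?thesis by (simp add: cbox_interval)
  qed
  have cM: "continuous_on {0..r} M"
  proof (rule continuous_at_imp_continuous_on, intro ballI)
    fix \<rho> assume "\<rho> \<in> {0..r}"
    then have "\<rho> \<in> {-R<..<R}" using R(1) r by auto
    then show "isCont M \<rho>" using circ_ode.dM[OF co] DERIV_isCont by blast
  qed
  define g where "g = (\<lambda>\<rho>. w \<rho> * (M \<rho> - M 0))"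
  have cg: "continuous_on {0..r} g" unfolding g_def by (intro continuous_intros cw cM)
  have ig: "g integrable_on {0..r}" by (rule integrable_continuous_real[OF cg])
  have wint: "(w has_integral r\<^sup>2 / 4) {0..r}" unfolding w_def by (rule w_int[OF r])
  have split: "integral {0..r} (\<lambda>\<rho>. w \<rho> * M \<rho>) = integral {0..r} g + M 0 * (r\<^sup>2 / 4)"
  proof -
    have iw: "(\<lambda>\<rho>. M 0 * w \<rho>) integrable_on {0..r}"
      using wint by (intro integrable_on_mult_right) (rule has_integral_integrable)
    have "integral {0..r} (\<lambda>\<rho>. w \<rho> * M \<rho>) = integral {0..r} (\<lambda>\<rho>. g \<rho> + M 0 * w \<rho>)"
      by (rule integral_cong) (simp add: g_def algebra_simps)
    also have "\<dots> = integral {0..r} g + integral {0..r} (\<lambda>\<rho>. M 0 * w \<rho>)"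
      by (rule integral_add[OF ig iw])
    also have "integral {0..r} (\<lambda>\<rho>. M 0 * w \<rho>) = M 0 * (r\<^sup>2 / 4)"
      using wint by (simp add: integral_mult_right integral_unique)
    finally show ?thesis .
  qed
  have wnn: "w \<rho> \<ge> 0" if "\<rho> \<in> {0..r}" for \<rho>
  proof (cases "\<rho> = 0")
    case True then show ?thesis by (simp add: w_def)
  next
    case False
    then have "\<rho> > 0" using that by simp
    then have "r / \<rho> \<ge> 1" using that by simp
    then show ?thesis using \<open>\<rho> > 0\<close> by (simp add: w_def)
  qed
  have gnn: "g \<rho> \<ge> 0" if "\<rho> \<in> {0..r}" for \<rho>
  proof -
    have "M 0 \<le> M \<rho>" using circ_ode.M_mono[OF co, of 0 \<rho>] that R(1) by simp
    then show ?thesis using wnn[OF that] by (simp add: g_def)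
  qed
  define \<delta> where "\<delta> = M (r/4) - M 0"
  have \<delta>pos: "\<delta> > 0" using circ_ode.M_strict[OF co M0pos, of 0 "r/4"] r R(1) by (simp add: \<delta>_def)
  define c where "c = (r/4 * ln 2) * \<delta>"
  have cpos: "c > 0" using r \<delta>pos by (simp add: c_def)
  have glow: "g \<rho> \<ge> c" if "\<rho> \<in> {r/4..r/2}" for \<rho>
  proof -
    have rho: "r/4 \<le> \<rho>" "\<rho> \<le> r/2" using that by auto
    have rp: "\<rho> > 0" using rho r by simp
    have "2 \<le> r / \<rho>" using rho rp by (simp add: field_simps)
    then have l2: "ln 2 \<le> ln (r / \<rho>)" using rp r by simp
    have "r/4 * ln 2 \<le> \<rho> * ln (r / \<rho>)"
      by (rule mult_mono) (use rho l2 in auto)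
    then have wl: "r/4 * ln 2 \<le> w \<rho>" by (simp add: w_def)
    have "M (r/4) \<le> M \<rho>" using circ_ode.M_mono[OF co, of "r/4" \<rho>] rho r R(1) by simp
    then have dl: "\<delta> \<le> M \<rho> - M 0" by (simp add: \<delta>_def)
    have "(r/4 * ln 2) * \<delta> \<le> w \<rho> * (M \<rho> - M 0)"
      by (rule mult_mono[OF wl dl]) (use rp r \<delta>pos wnn[of \<rho>] rho in auto)
    then show ?thesis by (simp add: g_def c_def)
  qed
  have "integral {r/4..r/2} (\<lambda>_. c) \<le> integral {r/4..r/2} g"
  proof (rule integral_le)
    show "(\<lambda>_. c) integrable_on {r/4..r/2}" by (rule integrable_continuous_real) (rule continuous_on_const)
    show "g integrable_on {r/4..r/2}"
      by (rule integrable_continuous_real, rule continuous_on_subset[OF cg]) (use r in auto)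
  qed (rule glow)
  moreover have "integral {r/4..r/2} (\<lambda>_. c) = r/4 * c" using r by simp
  moreover have "integral {r/4..r/2} g \<le> integral {0..r} g"
  proof (rule integral_subset_le)
    show "{r/4..r/2} \<subseteq> {0..r}" using r by auto
    show "g integrable_on {r/4..r/2}"
      by (rule integrable_continuous_real, rule continuous_on_subset[OF cg]) (use r in auto)
  qed (use ig gnn in auto)
  moreover have "r/4 * c > 0" using r cpos by simp
  ultimately have gpos: "integral {0..r} g > 0" by linarith
  have e1: "M 0 * (r\<^sup>2 / 4) = (u x / 2) * (pi * r\<^sup>2)" unfolding M0 by simp
  have "\<Phi> > (u x / 2) * (pi * r\<^sup>2)"
    using Phi split gpos e1 by linarith
  moreover have pr: "pi * r\<^sup>2 > 0" using r by simp
  ultimately have "u x / 2 < \<Phi> / (pi * r\<^sup>2)" using pos_less_divide_eq[OF pr] by blast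
  then show "u x / 2 < (1 / (pi * r\<^sup>2)) * integral (ball x r) (\<lambda>y. u y * ln (r / dist x y))"
    by (simp add: \<Phi>_def f_def)
qed

end
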